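(* Let $\mathcal{H}$ be a real Hilbert space with inner product $(\cdot,\cdot)$, let $C=[C_1,C_2,\ldots]\subseteq\mathcal{H}$ be a linearly independent collection of "constant" elements, and let $\mathrm{E}:\mathcal{H}\to\mathrm{span}\{C\}$ denote the orthogonal projection onto (the closure of) $\mathrm{span}\{C\}$ with respect to $(\cdot,\cdot)$. Let $\{Y_{jk}: j\in J,\ k=1,2,\ldots\}\subseteq\mathcal{H}$ be generalised second-order $n$-step exchangeable over $k$, i.e. there is $n\in\mathbb{N}$ with $\mathrm{E}(Y_{jk})=e_j$ for all $j,k$, and constants $d_{mij}$ ($0\le m\le n-1$) and $c_{ij}$ such that $(Y_{ik},Y_{jl})=d_{|k-l|\,ij}$ whenever $|k-l|\le n-1$ and $(Y_{ik},Y_{jl})=c_{ij}$ whenever $|k-l|\ge n$. Then the $Y_{jk}$ may be represented as $$Y_{jk}=M_j+R_{jk}\quad\forall j,k,$$ with $M_j,R_{jk}\in\mathcal{H}$ satisfying: $\mathrm{E}(Y_{jk})=\mathrm{E}(M_j)$ and $\mathrm{E}(R_{jk})=0$ for all $j,k$; $(M_i,M_j)=(M_i,Y_{jk})=c_{ij}$ and $(M_i,R_{jk})=0$ for all $i,j,k$; $(R_{ik},R_{jl})=(Y_{ik},R_{jl})=(Y_{ik},Y_{jl})-c_{ij}$ for all $i,j,k,l$. Further, the collection $\{R_{jk}\}$ is generalised second-order $n$-step exchangeable over $k$, with $(R_{ik},R_{jl})=0$ for all $i,j$ and all $|k-l|\ge n$.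
   Context: In the intended application $\mathcal{H}$ is the completion of the span of the constants and the $Y_{jk}$; for random scalars one takes $C=\{1\}$ and $(X,Y)=\mathrm{E}(XY)$, so that $\mathrm{E}$ is the usual expectation. *)

theory Defs
  imports "HOL-Analysis.Analysis"
begin

definition is_orth_proj :: "'a::real_inner set \<Rightarrow> ('a \<Rightarrow> 'a) \<Rightarrow> bool" where
  "is_orth_proj S E \<longleftrightarrow> (\<forall>x. E x \<in> S \<and> (\<forall>y\<in>S. inner (x - E x) y = 0))"

definition absdiff :: "nat \<Rightarrow> nat \<Rightarrow> nat" where
  "absdiff k l = (if k \<le> l then l - k else k - l)"

definition gso_exch ::
  "nat \<Rightarrow> ('a::real_inner \<Rightarrow> 'a) \<Rightarrow> ('j \<Rightarrow> nat \<Rightarrow> 'a) \<Rightarrow> ('j \<Rightarrow> 'a)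
     \<Rightarrow> (nat \<Rightarrow> 'j \<Rightarrow> 'j \<Rightarrow> real) \<Rightarrow> ('j \<Rightarrow> 'j \<Rightarrow> real) \<Rightarrow> bool" where
  "gso_exch n E Y e d c \<longleftrightarrow>
     (\<forall>j k. 1 \<le> k \<longrightarrow> E (Y j k) = e j) \<and>
     (\<forall>i j k l. 1 \<le> k \<longrightarrow> 1 \<le> l \<longrightarrow> absdiff k l < n \<longrightarrow>
        inner (Y i k) (Y j l) = d (absdiff k l) i j) \<and>
     (\<forall>i j k l. 1 \<le> k \<longrightarrow> 1 \<le> l \<longrightarrow> n \<le> absdiff k l \<longrightarrow>
        inner (Y i k) (Y j l) = c i j)"

end

theory Submission imports Defs begin

lemma orth_proj_unique:
  assumes "is_orth_proj S E" "z \<in> S" "\<forall>y\<in>S. inner (x - z) y = 0"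
  shows "E x = z"
proof -
  have h1: "E x \<in> S" "\<forall>y\<in>S. inner (x - E x) y = 0" using assms(1) unfolding is_orth_proj_def by auto
  have "z - E x = (x - E x) - (x - z)" by simp
  hence a: "inner (z - E x) y = 0" if "y \<in> S" for y
    using h1 assms(3) that by (simp add: inner_diff_left)
  have "inner (z - E x) (z - E x) = inner (z - E x) z - inner (z - E x) (E x)"
    by (simp add: inner_diff_right)
  also have "\<dots> = 0" using a[OF assms(2)] a[OF h1(1)] by simp
  finally show ?thesis by simp
qed

lemma cesaro_evconst:
  fixes f :: "nat \<Rightarrow> real"
  assumes "\<forall>l\<ge>K. f l = c"
  shows "(\<lambda>N. (1/real N) * (\<Sum>l=1..N. f l)) \<longlonglongrightarrow> c"
proof -
  define D where "D = (\<Sum>l=1..K. f l) - real K * c"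
  have ev: "\<forall>\<^sub>F N in sequentially. c + D / real N = (1/real N) * (\<Sum>l=1..N. f l)"
  proof (rule eventually_sequentiallyI[of "Suc K"])
    fix N assume N: "Suc K \<le> N"
    have "{1..N} = {1..K} \<union> {Suc K..N}" using N by auto
    hence "(\<Sum>l=1..N. f l) = (\<Sum>l=1..K. f l) + (\<Sum>l=Suc K..N. f l)"
      by (simp add: sum.union_disjoint)
    also have "(\<Sum>l=Suc K..N. f l) = (\<Sum>l=Suc K..N. c)" using assms by (intro sum.cong) auto
    also have "\<dots> = real (N - K) * c" by simp
    finally have "(\<Sum>l=1..N. f l) = D + real N * c" using N unfolding D_def
      by (simp add: of_nat_diff algebra_simps)
    thus "c + D / real N = (1/real N) * (\<Sum>l=1..N. f l)" using N by (simp add: field_simps)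
  qed
  have "(\<lambda>N. c + D / real N) \<longlonglongrightarrow> c + 0" by (intro tendsto_intros)
  thus ?thesis using Lim_transform_eventually[OF _ ev] by simp
qed

lemma row_bound:
  fixes \<delta> :: "nat \<Rightarrow> nat \<Rightarrow> real"
  assumes "\<forall>k l. \<bar>\<delta> k l\<bar> \<le> B" and "\<forall>k l. n \<le> absdiff k l \<longrightarrow> \<delta> k l = 0"
  shows "\<bar>\<Sum>l=1..M. \<delta> k l\<bar> \<le> real (2*n) * B"
proof -
  have B0: "0 \<le> B" using assms(1) by (meson abs_ge_zero order_trans)
  let ?T = "{l\<in>{1..M}. absdiff k l < n}"
  have "(\<Sum>l=1..M. \<delta> k l) = (\<Sum>l\<in>?T. \<delta> k l)"
    using assms(2) by (intro sum.mono_neutral_right) (auto simp: not_less)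
  hence "\<bar>\<Sum>l=1..M. \<delta> k l\<bar> \<le> (\<Sum>l\<in>?T. \<bar>\<delta> k l\<bar>)" by (simp add: sum_abs)
  also have "\<dots> \<le> (\<Sum>l\<in>?T. B)" using assms(1) by (intro sum_mono) auto
  also have "\<dots> = real (card ?T) * B" by simp
  also have "\<dots> \<le> real (2*n) * B"
  proof -
    have "?T \<subseteq> {k-n..<k+n}" by (auto simp: absdiff_def split: if_splits)
    hence "card ?T \<le> card {k-n..<k+n}" by (intro card_mono) auto
    also have "\<dots> \<le> 2*n" by simp
    finally show ?thesis using B0 by (intro mult_right_mono) auto
  qed
  finally show ?thesis .
qed

lemma dsum_bound:
  fixes \<delta> :: "nat \<Rightarrow> nat \<Rightarrow> real"
  assumes "\<forall>k l. \<bar>\<delta> k l\<bar> \<le> B" and "\<forall>k l. n \<le> absdiff k l \<longrightarrow> \<delta> k l = 0"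
  shows "\<bar>\<Sum>k=1..N. \<Sum>l=1..M. \<delta> k l\<bar> \<le> real N * (real (2*n) * B)"
proof -
  have "\<bar>\<Sum>k=1..N. \<Sum>l=1..M. \<delta> k l\<bar> \<le> (\<Sum>k=1..N. \<bar>\<Sum>l=1..M. \<delta> k l\<bar>)" by (rule sum_abs)
  also have "\<dots> \<le> (\<Sum>k=1..N. real (2*n) * B)" using row_bound[OF assms] by (intro sum_mono) auto
  finally show ?thesis by simp
qed

lemma dsum_bound2:
  fixes \<delta> :: "nat \<Rightarrow> nat \<Rightarrow> real"
  assumes "\<forall>k l. \<bar>\<delta> k l\<bar> \<le> B" and "\<forall>k l. n \<le> absdiff k l \<longrightarrow> \<delta> k l = 0"
  shows "\<bar>\<Sum>k=1..N. \<Sum>l=1..M. \<delta> k l\<bar> \<le> real M * (real (2*n) * B)"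
proof -
  have ac: "absdiff l k = absdiff k l" for k l by (simp add: absdiff_def)
  have s: "\<forall>k l. n \<le> absdiff k l \<longrightarrow> \<delta> l k = 0" using assms(2) ac by metis
  have "(\<Sum>k=1..N. \<Sum>l=1..M. \<delta> k l) = (\<Sum>l=1..M. \<Sum>k=1..N. \<delta> k l)" by (rule sum.swap)
  thus ?thesis using dsum_bound[where \<delta>="\<lambda>l k. \<delta> k l" and N=M and M=N] assms(1) s by simp
qed

lemma avg_cauchy:
  fixes Z :: "nat \<Rightarrow> 'a::real_inner"
  assumes fc: "\<forall>k l. 1\<le>k \<longrightarrow> 1\<le>l \<longrightarrow> n \<le> absdiff k l \<longrightarrow> inner (Z k) (Z l) = c"
    and fb: "\<forall>k l. 1\<le>k \<longrightarrow> 1\<le>l \<longrightarrow> \<bar>inner (Z k) (Z l) - c\<bar> \<le> B"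
  shows "Cauchy (\<lambda>N. (1/real N) *\<^sub>R (\<Sum>k=1..N. Z k))"
proof (rule CauchyI)
  fix e :: real assume e: "0 < e"
  have B0: "0 \<le> B" using fb[rule_format, of 1 1] by linarith
  define \<delta> where "\<delta> k l = (if 1\<le>k \<and> 1\<le>l then inner (Z k) (Z l) - c else 0)" for k l
  have db: "\<forall>k l. \<bar>\<delta> k l\<bar> \<le> B" using fb B0 by (simp add: \<delta>_def)
  have dz: "\<forall>k l. n \<le> absdiff k l \<longrightarrow> \<delta> k l = 0" using fc by (simp add: \<delta>_def)
  define S where "S N = (\<Sum>k=1..N. Z k)" for N
  define X where "X N M = (\<Sum>k=1..N. \<Sum>l=1..M. \<delta> k l)" for N M
  define K0 where "K0 = real (2*n) * B"
  have K00: "0 \<le> K0" using B0 by (simp add: K0_def)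
  have P: "inner (S N) (S M) = real N * real M * c + X N M" for N M
  proof -
    have "inner (S N) (S M) = (\<Sum>k=1..N. \<Sum>l=1..M. inner (Z k) (Z l))"
      unfolding S_def inner_sum_left inner_sum_right by (rule sum.swap)
    also have "\<dots> = (\<Sum>k=1..N. \<Sum>l=1..M. c + \<delta> k l)"
      by (intro sum.cong refl) (simp add: \<delta>_def)
    also have "\<dots> = real N * real M * c + X N M"
      by (simp add: sum.distrib X_def sum_distrib_left)
    finally show ?thesis .
  qed
  have XN: "\<bar>X N M\<bar> \<le> real N * K0" and XM: "\<bar>X N M\<bar> \<le> real M * K0" for N M
    using dsum_bound[OF db dz] dsum_bound2[OF db dz] by (simp_all add: X_def K0_def)
  have main: "(norm ((1/real N) *\<^sub>R S N - (1/real M) *\<^sub>R S M))\<^sup>2 \<le> K0 * (3 / real N + 1 / real M)"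
    if N: "1 \<le> N" and M: "1 \<le> M" for N M
  proof -
    define a where "a = 1 / real N"
    define b where "b = 1 / real M"
    have a0: "0 < a" "a * real N = 1" using N by (auto simp: a_def)
    have b0: "0 < b" "b * real M = 1" using M by (auto simp: b_def)
    have "(norm (a *\<^sub>R S N - b *\<^sub>R S M))\<^sup>2 = inner (a *\<^sub>R S N - b *\<^sub>R S M) (a *\<^sub>R S N - b *\<^sub>R S M)"
      by (simp add: power2_norm_eq_inner)
    also have "\<dots> = a*a * inner (S N) (S N) - 2*a*b * inner (S N) (S M) + b*b* inner (S M) (S M)"
      by (simp add: inner_diff_left inner_diff_right inner_commute[of "S M" "S N"] algebra_simps)
    also have "\<dots> = (a * real N)*(a * real N) * c + a*a * X N N - 2 * (a * real N) * (b * real M) * c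
       - 2*a*b * X N M + (b * real M) * (b * real M) * c + b*b*X M M"
      unfolding P by (simp add: algebra_simps)
    also have "\<dots> = a*a * X N N - 2*a*b * X N M + b*b*X M M" using a0 b0 by simp
    also have "\<dots> \<le> a*a * \<bar>X N N\<bar> + 2*a*b * \<bar>X N M\<bar> + b*b*\<bar>X M M\<bar>"
    proof -
      have t1: "a*a * X N N \<le> a*a * \<bar>X N N\<bar>" using a0 by (intro mult_left_mono) auto
      have t2: "(2*a*b) * (- X N M) \<le> (2*a*b) * \<bar>X N M\<bar>" using a0 b0 by (intro mult_left_mono) auto
      have t3: "b*b * X M M \<le> b*b * \<bar>X M M\<bar>" using b0 by (intro mult_left_mono) auto
      show ?thesis using t1 t2 t3 by (simp add: algebra_simps)
    qed
    also have "\<dots> \<le> a*a * (real N * K0) + 2*a*b * (real M * K0) + b*b*(real M * K0)"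
      using a0 b0 XN[of N N] XM[of N M] XM[of M M]
      by (intro add_mono mult_left_mono) auto
    also have "\<dots> = K0 * (3 * a + b)"
      using a0 b0 by (simp add: algebra_simps)
    finally show ?thesis by (simp add: a_def b_def)
  qed
  obtain K :: nat where K: "4 * K0 / (e*e) < real K" using reals_Archimedean2 by blast
  have K1: "1 \<le> K"
  proof -
    have "0 \<le> 4 * K0 / (e*e)" using K00 by simp
    thus ?thesis using K by linarith
  qed
  have "4 * K0 < real K * (e * e)" using K e by (simp add: field_simps)
  show "\<exists>M. \<forall>m\<ge>M. \<forall>n\<ge>M. norm ((1/real m) *\<^sub>R (\<Sum>k=1..m. Z k) - (1/real n) *\<^sub>R (\<Sum>k=1..n. Z k)) < e"
  proof (intro exI allI impI)
    fix N M assume N: "K \<le> N" and M: "K \<le> M"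
    have N1: "1 \<le> N" "1 \<le> M" using N M K1 by auto
    have "K0 * (3 / real N + 1 / real M) \<le> K0 * (3 / real K + 1 / real K)"
      using N M K1 K00 by (intro mult_left_mono add_mono divide_left_mono) auto
    also have "\<dots> = 4 * K0 / real K" by (simp add: field_simps)
    also have "\<dots> < e * e" using \<open>4 * K0 < real K * (e * e)\<close> K1 by (simp add: field_simps)
    finally have "(norm ((1/real N) *\<^sub>R S N - (1/real M) *\<^sub>R S M))\<^sup>2 < e\<^sup>2"
      using main[OF N1] by (simp add: power2_eq_square)
    hence "norm ((1/real N) *\<^sub>R S N - (1/real M) *\<^sub>R S M) < e"
      using e by (meson abs_le_square_iff less_le_not_le norm_ge_zero power2_less_imp_less)
    thus "norm ((1/real N) *\<^sub>R (\<Sum>k=1..N. Z k) - (1/real M) *\<^sub>R (\<Sum>k=1..M. Z k)) < e"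
      by (simp add: S_def)
  qed
qed

theorem theorem1:
  fixes C :: "'a::{real_inner, complete_space} set"
    and E :: "'a \<Rightarrow> 'a"
    and Y :: "'j \<Rightarrow> nat \<Rightarrow> 'a"
    and n :: nat
    and e :: "'j \<Rightarrow> 'a"
    and d :: "nat \<Rightarrow> 'j \<Rightarrow> 'j \<Rightarrow> real"
    and c :: "'j \<Rightarrow> 'j \<Rightarrow> real"
  assumes indepC: "independent C"
    and projE: "is_orth_proj (closure (span C)) E"
    and exch: "gso_exch n E Y e d c"
  shows "\<exists>M R.
     (\<forall>j k. 1 \<le> k \<longrightarrow> Y j k = M j + R j k) \<and>
     (\<forall>j k. 1 \<le> k \<longrightarrow> E (Y j k) = E (M j) \<and> E (R j k) = 0) \<and>
     (\<forall>i j k. 1 \<le> k \<longrightarrow>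
        inner (M i) (M j) = c i j \<and> inner (M i) (Y j k) = c i j \<and> inner (M i) (R j k) = 0) \<and>
     (\<forall>i j k l. 1 \<le> k \<longrightarrow> 1 \<le> l \<longrightarrow>
        inner (R i k) (R j l) = inner (Y i k) (R j l) \<and>
        inner (Y i k) (R j l) = inner (Y i k) (Y j l) - c i j) \<and>
     (\<exists>e' d' c'. gso_exch n E R e' d' c') \<and>
     (\<forall>i j k l. 1 \<le> k \<longrightarrow> 1 \<le> l \<longrightarrow> n \<le> absdiff k l \<longrightarrow> inner (R i k) (R j l) = 0)"
proof -
  have Ee: "\<And>j k. 1 \<le> k \<Longrightarrow> E (Y j k) = e j"
    and Yd: "\<And>i j k l. 1 \<le> k \<Longrightarrow> 1 \<le> l \<Longrightarrow> absdiff k l < n \<Longrightarrow> inner (Y i k) (Y j l) = d (absdiff k l) i j"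
    and Yc: "\<And>i j k l. 1 \<le> k \<Longrightarrow> 1 \<le> l \<Longrightarrow> n \<le> absdiff k l \<Longrightarrow> inner (Y i k) (Y j l) = c i j"
    using exch unfolding gso_exch_def by blast+
  define A where "A j N = (1/real N) *\<^sub>R (\<Sum>k=1..N. Y j k)" for j N
  define M where "M j = lim (A j)" for j
  define R where "R j k = Y j k - M j" for j k
  have conv: "A j \<longlonglongrightarrow> M j" for j
  proof -
    define B where "B = (\<Sum>m<n. \<bar>d m j j - c j j\<bar>)"
    have fb: "\<forall>k l. 1\<le>k \<longrightarrow> 1\<le>l \<longrightarrow> \<bar>inner (Y j k) (Y j l) - c j j\<bar> \<le> B"
    proof (intro allI impI)
      fix k l :: nat assume k: "1 \<le> k" and l: "1 \<le> l"
      show "\<bar>inner (Y j k) (Y j l) - c j j\<bar> \<le> B"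
      proof (cases "absdiff k l < n")
        case True
        hence "\<bar>inner (Y j k) (Y j l) - c j j\<bar> = \<bar>d (absdiff k l) j j - c j j\<bar>" using Yd k l by simp
        also have "\<dots> \<le> B" unfolding B_def using True
          by (intro member_le_sum[where f="\<lambda>m. \<bar>d m j j - c j j\<bar>"]) auto
        finally show ?thesis .
      next
        case False
        hence "\<bar>inner (Y j k) (Y j l) - c j j\<bar> = 0" using Yc k l by simp
        also have "0 \<le> B" unfolding B_def by (intro sum_nonneg) auto
        finally show ?thesis .
      qed
    qed
    have "Cauchy (A j)" unfolding A_def
      by (rule avg_cauchy[where n=n and c="c j j" and B=B]) (use Yc fb in auto)
    hence "convergent (A j)" by (simp add: Cauchy_convergent_iff)
    thus ?thesis by (simp add: M_def convergent_LIMSEQ_iff)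
  qed
  have csym: "c i j = c j i" for i j
  proof -
    have ad: "absdiff 1 (n+1) = n" "absdiff (n+1) 1 = n" by (auto simp: absdiff_def)
    have "c i j = inner (Y i 1) (Y j (n+1))" using Yc[of 1 "n+1" i j] ad by simp
    also have "\<dots> = inner (Y j (n+1)) (Y i 1)" by (rule inner_commute)
    also have "\<dots> = c j i" using Yc[of "n+1" 1 j i] ad by simp
    finally show ?thesis .
  qed
  have MY: "inner (M i) (Y j k) = c i j" if k: "1 \<le> k" for i j k
  proof -
    have l1: "(\<lambda>N. inner (A i N) (Y j k)) \<longlonglongrightarrow> inner (M i) (Y j k)" by (intro tendsto_intros conv)
    have eq: "(\<lambda>N. inner (A i N) (Y j k)) = (\<lambda>N. (1/real N) * (\<Sum>l=1..N. inner (Y i l) (Y j k)))"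
      by (simp add: A_def inner_sum_left)
    have "\<forall>l\<ge>k+n. inner (Y i l) (Y j k) = c i j"
    proof (intro allI impI)
      fix l assume l: "k + n \<le> l"
      have "n \<le> absdiff l k" using l by (auto simp add: absdiff_def)
      thus "inner (Y i l) (Y j k) = c i j" using Yc[of l k i j] k l by simp
    qed
    hence "(\<lambda>N. inner (A i N) (Y j k)) \<longlonglongrightarrow> c i j" unfolding eq by (rule cesaro_evconst)
    thus ?thesis using l1 LIMSEQ_unique by blast
  qed
  have MM: "inner (M i) (M j) = c i j" for i j
  proof -
    have l1: "(\<lambda>N. inner (M i) (A j N)) \<longlonglongrightarrow> inner (M i) (M j)" by (intro tendsto_intros conv)
    have eq: "(\<lambda>N. inner (M i) (A j N)) = (\<lambda>N. (1/real N) * (\<Sum>l=1..N. inner (M i) (Y j l)))"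
      by (simp add: A_def inner_sum_right)
    have "\<forall>l\<ge>1. inner (M i) (Y j l) = c i j" using MY by auto
    hence "(\<lambda>N. inner (M i) (A j N)) \<longlonglongrightarrow> c i j" unfolding eq by (rule cesaro_evconst)
    thus ?thesis using l1 LIMSEQ_unique by blast
  qed
  define S where "S = closure (span C)"
  have projS: "is_orth_proj S E" using projE by (simp add: S_def)
  have eS: "e j \<in> S" for j using projS Ee[of 1 j] unfolding is_orth_proj_def by (metis order_refl)
  have S0: "0 \<in> S" unfolding S_def using closure_subset span_zero by blast
  have Yperp: "inner (Y j k - e j) y = 0" if "1 \<le> k" "y \<in> S" for j k y
    using projS Ee[OF that(1)] that(2) unfolding is_orth_proj_def by metis
  have Mperp: "inner (M j - e j) y = 0" if y: "y \<in> S" for j y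
  proof -
    have l1: "(\<lambda>N. inner (A j N - e j) y) \<longlonglongrightarrow> inner (M j - e j) y" by (intro tendsto_intros conv)
    have ev: "\<forall>\<^sub>F N in sequentially. 0 = inner (A j N - e j) y"
    proof (rule eventually_sequentiallyI[of 1])
      fix N :: nat assume N: "1 \<le> N"
      have "inner (A j N) y = (1/real N) * (\<Sum>k=1..N. inner (Y j k) y)"
        by (simp add: A_def inner_sum_left)
      also have "\<dots> = (1/real N) * (\<Sum>k=1..N. inner (e j) y)"
        using Yperp[OF _ y] by (intro arg_cong[where f="\<lambda>t. (1/real N) * t"] sum.cong refl)
          (auto simp: inner_diff_left)
      also have "\<dots> = inner (e j) y" using N by simp
      finally show "0 = inner (A j N - e j) y" by (simp add: inner_diff_left)
    qed
    have "(\<lambda>N. inner (A j N - e j) y) \<longlonglongrightarrow> 0" by (rule Lim_transform_eventually[OF tendsto_const ev])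
    thus ?thesis using l1 LIMSEQ_unique by blast
  qed
  have EM: "E (M j) = e j" for j by (rule orth_proj_unique[OF projS eS]) (use Mperp in blast)
  have ER: "E (R j k) = 0" if k: "1 \<le> k" for j k
  proof (rule orth_proj_unique[OF projS S0], intro ballI)
    fix y assume y: "y \<in> S"
    have "R j k - 0 = (Y j k - e j) - (M j - e j)" by (simp add: R_def)
    thus "inner (R j k - 0) y = 0" using Yperp[OF k y] Mperp[OF y] by (simp add: inner_diff_left)
  qed
  have MR: "inner (M i) (R j k) = 0" if "1 \<le> k" for i j k
    using MY[OF that] MM by (simp add: R_def inner_diff_right)
  have YR: "inner (Y i k) (R j l) = inner (Y i k) (Y j l) - c i j" if "1 \<le> k" "1 \<le> l" for i j k l
    using MY[OF that(1), of j i] MM by (simp add: R_def inner_diff_right inner_commute[of "Y i k"] csym[of i j])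
  have RR: "inner (R i k) (R j l) = inner (Y i k) (R j l)" if "1 \<le> k" "1 \<le> l" for i j k l
    using MR[OF that(2), of i j] unfolding R_def[of i k] by (simp add: inner_diff_left)
  have gR: "gso_exch n E R (\<lambda>_. 0) (\<lambda>m i j. d m i j - c i j) (\<lambda>_ _. 0)"
    unfolding gso_exch_def using ER RR YR Yd Yc by auto
  show ?thesis
    apply (rule exI[of _ M], rule exI[of _ R])
    using gR RR YR MR MY MM EM Ee ER Yc by (auto simp: R_def)
qed

end
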